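(* Fix $\varepsilon>0$, $\delta\in(0,1)$, an even integer $d>4(e^{2\varepsilon}-1)^2\ln(12e^{\varepsilon}n/\delta)$, and $\varepsilon$-private randomizers $R_1,\dots,R_n:[d]\to\mathcal Y$. If $H$ is chosen uniformly among subsets of $[d]$ of size $d/2$, then with probability greater than $2/3$ over $H$, every randomizer $Q_{H,R_i}$, $i\in[n]$, is $(\varepsilon',\delta)$-private, where \[ \varepsilon'=(e^{2\varepsilon}-1)\sqrt{\frac{16}{d}\ln\left(24e^{\varepsilon}n/\delta\right)} . \]
   Context: $\mathcal Y$ is a countable message set. A randomizer $R:\mathcal X\to\mathcal Y$ is $(\varepsilon,\delta)$-private if for all $x,x'\in\mathcal X$ and all $Y\subseteq\mathcal Y$, $\Pr[R(x)\in Y]\le e^{\varepsilon}\Pr[R(x')\in Y]+\delta$; it is $\varepsilon$-private if this holds with $\delta=0$. $\mathbf U_H$ is the uniform distribution on $H\subseteq[d]$, $\overline H=[d]\setminus H$, and $R(\mathbf U_H)$ is the distribution of $R(\hat x)$ with $\hat x\sim\mathbf U_H$. For $H\subset[d]$ with $|H|=d/2$ and a randomizer $R:[d]\to\mathcal Y$, $Q_{H,R}:\{\pm1\}\to\mathcal Y$ is the randomizer that on input $+1$ outputs a sample of $R(\mathbf U_H)$ and on input $-1$ outputs a sample of $R(\mathbf U_{\overline H})$. *)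

theory Defs
  imports "HOL-Probability.Probability"
begin

definition private_randomizer ::
  "'x set \<Rightarrow> ('x \<Rightarrow> 'y::countable pmf) \<Rightarrow> real \<Rightarrow> real \<Rightarrow> bool" where
  "private_randomizer X R eps delta \<longleftrightarrow>
     (\<forall>x\<in>X. \<forall>x'\<in>X. \<forall>Y::'y set.
        measure_pmf.prob (R x) Y \<le> exp eps * measure_pmf.prob (R x') Y + delta)"

definition dset :: "nat \<Rightarrow> nat set" where
  "dset d = {1..d}"

definition rand_uniform :: "nat set \<Rightarrow> (nat \<Rightarrow> 'y pmf) \<Rightarrow> 'y pmf" where
  "rand_uniform H R = bind_pmf (pmf_of_set H) R"

text \<open>Q_{H,R} : {+1,-1} -> Y (inputs are the integers 1 and -1).\<close>
definition Q_rand :: "nat \<Rightarrow> nat set \<Rightarrow> (nat \<Rightarrow> 'y pmf) \<Rightarrow> int \<Rightarrow> 'y pmf" where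
  "Q_rand d H R s = (if s = 1 then rand_uniform H R else rand_uniform (dset d - H) R)"

definition half_subsets :: "nat \<Rightarrow> nat set set" where
  "half_subsets d = {H. H \<subseteq> dset d \<and> card H = d div 2}"

end

theory Submission
  imports Defs "HOL-Combinatorics.Permutations"
begin


lemma cosh_le_exp_aux:
  fixes x :: real assumes "x \<ge> 0"
  shows "(exp x + exp (- x)) / 2 \<le> exp (x^2/2)"
proof -
  have "-(2*x) * (1/2) + ln (1 + (1/2) * (exp (2*x) - 1)) \<le> (2*x)^2/8"
    using Hoeffdings_lemma_aux[of "2*x" "1/2"] assms by simp
  hence "ln ((1 + exp (2*x))/2) \<le> x + x^2/2"
    by (simp add: power2_eq_square algebra_simps add_divide_distrib)
  hence "exp (ln ((1 + exp (2*x))/2)) \<le> exp (x + x^2/2)" by simp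
  hence "(1 + exp (2*x))/2 \<le> exp x * exp (x^2/2)"
    by (simp add: exp_add add_pos_pos)
  hence "(1 + exp (2*x))/2 / exp x \<le> exp (x^2/2)"
    by (simp add: divide_le_eq mult.commute)
  moreover have "(1 + exp (2*x))/2 / exp x = (exp x + exp (-x))/2"
    by (simp add: field_simps exp_minus flip: exp_add) 
  ultimately show ?thesis by metis
qed

lemma cosh_le_exp:
  fixes x :: real
  shows "(exp x + exp (- x)) / 2 \<le> exp (x^2/2)"
proof (cases "x \<ge> 0")
  case True then show ?thesis by (rule cosh_le_exp_aux)
next
  case False
  then have "(exp (-x) + exp (- (-x))) / 2 \<le> exp ((-x)^2/2)" by (intro cosh_le_exp_aux) auto
  then show ?thesis by (simp add: add.commute)
qed

lemma rademacher_tail: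
  fixes c :: "nat \<Rightarrow> real"
  assumes t: "t > 0" and V: "V > 0" and cV: "(\<Sum>j<k. (c j)^2) \<le> V"
  shows "real (card {T \<in> Pow {..<k}. (\<Sum>j<k. (if j \<in> T then c j else - c j)) > t})
           \<le> 2^k * exp (-(t^2)/(2*V))"
proof -
  define l where "l = t / V"
  have l: "l > 0" using t V by (simp add: l_def)
  define S where "S = (\<lambda>T. (\<Sum>j<k. (if j \<in> T then c j else - c j)))"
  define G where "G = {T \<in> Pow {..<k}. S T > t}"
  have "real (card G) * exp (l * t) = (\<Sum>T\<in>G. exp (l * t))" by simp
  also have "\<dots> \<le> (\<Sum>T\<in>G. exp (l * S T))"
    by (intro sum_mono) (use l in \<open>auto simp: G_def\<close>)
  also have "\<dots> \<le> (\<Sum>T\<in>Pow {..<k}. exp (l * S T))"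
    by (intro sum_mono2) (auto simp: G_def)
  also have "\<dots> = (\<Sum>T\<in>Pow {..<k}. prod (\<lambda>j. exp (l * c j)) T * prod (\<lambda>j. exp (- (l * c j))) ({..<k} - T))"
  proof (intro sum.cong refl)
    fix T assume T: "T \<in> Pow {..<k}"
    have "exp (l * S T) = (\<Prod>j<k. if j \<in> T then exp (l * c j) else exp (- (l * c j)))"
      unfolding S_def sum_distrib_left by (subst exp_sum) (auto intro!: prod.cong)
    also have "\<dots> = prod (\<lambda>j. exp (l * c j)) ({..<k} \<inter> {j. j \<in> T}) * prod (\<lambda>j. exp (- (l * c j))) ({..<k} \<inter> - {j. j \<in> T})"
      by (rule prod.If_cases) simp
    also have "{..<k} \<inter> {j. j \<in> T} = T" using T by auto
    also have "{..<k} \<inter> - {j. j \<in> T} = {..<k} - T" by auto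
    finally show "exp (l * S T) = prod (\<lambda>j. exp (l * c j)) T * prod (\<lambda>j. exp (- (l * c j))) ({..<k} - T)" .
  qed
  also have "\<dots> = (\<Prod>j<k. exp (l * c j) + exp (- (l * c j)))"
    by (rule prod_add[symmetric]) simp
  also have "\<dots> \<le> (\<Prod>j<k. 2 * exp ((l * c j)^2 / 2))"
    by (intro prod_mono) (use cosh_le_exp in \<open>auto simp: divide_le_eq mult.commute\<close>)
  also have "\<dots> = 2^k * exp (l^2 * (\<Sum>j<k. (c j)^2) / 2)"
    by (simp add: prod.distrib exp_sum[symmetric] sum_distrib_left sum_divide_distrib power_mult_distrib)
  also have "\<dots> \<le> 2^k * exp (l^2 * V / 2)"
    using cV by (intro mult_left_mono) (auto intro!: divide_right_mono mult_left_mono)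
  finally have "real (card G) * exp (l * t) \<le> 2^k * exp (l^2 * V / 2)" .
  hence "real (card G) \<le> 2^k * exp (l^2 * V / 2) / exp (l * t)"
    by (simp add: le_divide_eq)
  also have "\<dots> = 2^k * exp (l^2 * V / 2 - l * t)" by (simp add: exp_diff)
  also have "l^2 * V / 2 - l * t = -(t^2)/(2*V)"
    using V by (simp add: l_def power2_eq_square field_simps)
  finally show ?thesis by (simp add: G_def S_def)
qed



lemma exists_perm_map:
  assumes D: "finite D" and H: "H \<subseteq> D" and H': "H' \<subseteq> D" and c: "card H = card H'"
  shows "\<exists>g. g permutes D \<and> g ` H = H'"
proof -
  have fH: "finite H" "finite H'" using D H H' finite_subset by auto
  obtain h1 where h1: "bij_betw h1 H H'" using finite_same_card_bij[OF fH c] by blast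
  have "card (D - H) = card (D - H')"
    using c H H' D fH by (simp add: card_Diff_subset)
  then obtain h2 where h2: "bij_betw h2 (D - H) (D - H')"
    using finite_same_card_bij[of "D - H" "D - H'"] D by blast
  define g where "g x = (if x \<in> H then h1 x else if x \<in> D then h2 x else x)" for x
  have b1: "bij_betw g H H'" using h1 by (rule bij_betw_cong[THEN iffD1, rotated]) (simp add: g_def)
  have b2: "bij_betw g (D - H) (D - H')" using h2 by (rule bij_betw_cong[THEN iffD1, rotated]) (simp add: g_def)
  have "bij_betw g (H \<union> (D - H)) (H' \<union> (D - H'))"
    by (rule bij_betw_combine[OF b1 b2]) auto
  moreover have "H \<union> (D - H) = D" "H' \<union> (D - H') = D" using H H' by auto
  ultimately have "bij_betw g D D" by simp
  hence "g permutes D" by (rule bij_imp_permutes) (use H in \<open>auto simp: g_def\<close>)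
  moreover have "g ` H = H'" using b1 by (simp add: bij_betw_def)
  ultimately show ?thesis by blast
qed

lemma orbit_average:
  fixes f :: "'a set \<Rightarrow> real"
  assumes D: "finite D" and A: "A \<subseteq> D" "card A = m"
  defines "S \<equiv> {H. H \<subseteq> D \<and> card H = m}" and "P \<equiv> {p. p permutes D}"
  shows "(\<Sum>p\<in>P. f (p ` A)) * real (card S) = real (card P) * (\<Sum>H\<in>S. f H)"
proof -
  define F where "F H = {p \<in> P. p ` A = H}" for H
  have finP: "finite P" unfolding P_def using D by (rule finite_permutations)
  have finS: "finite S" unfolding S_def using D by (auto intro: finite_subset[of _ "Pow D"])
  have img: "(\<lambda>p. p ` A) ` P = S"
  proof
    show "(\<lambda>p. p ` A) ` P \<subseteq> S"
    proof
      fix H assume "H \<in> (\<lambda>p. p ` A) ` P"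
      then obtain p where p: "p permutes D" "H = p ` A" by (auto simp: P_def)
      have "p ` A \<subseteq> D" using A p permutes_image by blast
      moreover have "card (p ` A) = m" using A p permutes_inj card_image
        by (metis inj_on_subset subset_UNIV)
      ultimately show "H \<in> S" using p by (auto simp: S_def)
    qed
  next
    show "S \<subseteq> (\<lambda>p. p ` A) ` P"
    proof
      fix H assume "H \<in> S"
      then obtain g where "g permutes D" "g ` A = H"
        using exists_perm_map[OF D A(1), of H] A by (auto simp: S_def)
      thus "H \<in> (\<lambda>p. p ` A) ` P" by (auto simp: P_def)
    qed
  qed
  have cardle: "card (F H) \<le> card (F H')" if "H \<in> S" "H' \<in> S" for H H'
  proof -
    have "H \<subseteq> D" "H' \<subseteq> D" "card H = card H'" using that by (auto simp: S_def)
    then obtain g where g: "g permutes D" "g ` H = H'"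
      using exists_perm_map[OF D] by blast
    have "inj_on ((\<circ>) g) (F H)"
      using permutes_inj[OF g(1)] by (auto simp: inj_on_def fun_eq_iff inj_def)
    moreover have "(\<circ>) g ` F H \<subseteq> F H'"
      using g by (auto simp: F_def P_def image_comp[symmetric] intro: permutes_compose)
    moreover have "finite (F H')" using finP by (simp add: F_def)
    ultimately show ?thesis by (rule card_inj_on_le)
  qed
  have cF: "card (F H) = card (F A)" if "H \<in> S" for H
  proof -
    have "A \<in> S" using A by (simp add: S_def)
    thus ?thesis using cardle[OF that] cardle[of A H] that by (simp add: le_antisym)
  qed
  have sumP: "(\<Sum>p\<in>P. g (p ` A)) = real (card (F A)) * (\<Sum>H\<in>S. g H)" for g :: "'a set \<Rightarrow> real"
  proof -
    have "(\<Sum>p\<in>P. g (p ` A)) = (\<Sum>H\<in>(\<lambda>p. p ` A) ` P. \<Sum>p\<in>{p \<in> P. p ` A = H}. g (p ` A))"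
      by (rule sum.image_gen[OF finP])
    also have "\<dots> = (\<Sum>H\<in>S. real (card (F H)) * g H)"
      unfolding img by (intro sum.cong refl) (auto simp: F_def)
    also have "\<dots> = (\<Sum>H\<in>S. real (card (F A)) * g H)"
      by (intro sum.cong refl) (simp add: cF)
    finally show ?thesis by (simp add: sum_distrib_left)
  qed
  have "real (card P) = real (card (F A)) * real (card S)"
    using sumP[of "\<lambda>_. 1"] by simp
  thus ?thesis using sumP[of f] by simp
qed



definition pairsel :: "nat \<Rightarrow> nat set \<Rightarrow> nat set" where
  "pairsel k T = (\<lambda>j. if j \<in> T then 2*j+2 else 2*j+1) ` {..<k}"

lemma pairsel_inj: "inj_on (\<lambda>j. if j \<in> T then 2*j+2 else 2*j+(1::nat)) {..<k}"
  by (auto simp: inj_on_def split: if_splits)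

lemma pairsel_sub: "pairsel k T \<subseteq> {1..2*k}"
  by (auto simp: pairsel_def)

lemma pairsel_card: "card (pairsel k T) = k"
  unfolding pairsel_def by (subst card_image[OF pairsel_inj]) simp

lemma sum_pairs:
  fixes k :: nat and g :: "nat \<Rightarrow> 'a::comm_monoid_add"
  shows "(\<Sum>a\<in>{1..2*k}. g a) = (\<Sum>j<k. g (2*j+1) + g (2*j+2))"
proof (induction k)
  case 0 then show ?case by simp
next
  case (Suc k)
  have "{1..2*Suc k} = insert (2*k+2) (insert (2*k+1) {1..2*k})" by auto
  then show ?case using Suc by (simp add: ac_simps)
qed

lemma sum_pairsel:
  fixes g :: "nat \<Rightarrow> real"
  assumes "(\<Sum>a\<in>{1..2*k}. g a) = 0"
  shows "(\<Sum>a\<in>pairsel k T. g a) = (\<Sum>j<k. if j \<in> T then (g (2*j+2) - g (2*j+1))/2 else - ((g (2*j+2) - g (2*j+1))/2))"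
proof -
  have "(\<Sum>a\<in>pairsel k T. g a) = (\<Sum>j<k. g (if j \<in> T then 2*j+2 else 2*j+1))"
    unfolding pairsel_def by (subst sum.reindex[OF pairsel_inj]) simp
  also have "\<dots> = (\<Sum>j<k. (if j \<in> T then (g (2*j+2) - g (2*j+1))/2 else - ((g (2*j+2) - g (2*j+1))/2)) + (g (2*j+1) + g (2*j+2))/2)"
    by (intro sum.cong) (auto simp: field_simps)
  also have "\<dots> = (\<Sum>j<k. if j \<in> T then (g (2*j+2) - g (2*j+1))/2 else - ((g (2*j+2) - g (2*j+1))/2)) + (\<Sum>j<k. (g (2*j+1) + g (2*j+2))/2)"
    by (simp only: sum.distrib)
  also have "(\<Sum>j<k. (g (2*j+1) + g (2*j+2))/2) = (\<Sum>a\<in>{1..2*k}. g a) / 2"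
    by (simp only: sum_pairs sum_divide_distrib)
  finally show ?thesis using assms by simp
qed



lemma exp_quad:
  fixes t :: real assumes "0 \<le> t" "t \<le> 4/5"
  shows "1 + t \<le> exp (4*t) * (1 - t)"
proof -
  have e: "1 + 4*t + (4*t)^2/2 \<le> exp (4*t)" using exp_lower_Taylor_quadratic[of "4*t"] assms by simp
  have "1 + t \<le> (1 + 4*t + (4*t)^2/2) * (1 - t)"
  proof -
    have "t * (2 + 4*t - 8*t^2) \<ge> 0"
    proof (rule mult_nonneg_nonneg)
      have "t*t \<le> (4/5)*t" using mult_right_mono[OF assms(2) assms(1)] .
      hence "8*t^2 \<le> 8*(4/5)*t" by (simp add: power2_eq_square)
      thus "2 + 4*t - 8*t^2 \<ge> 0" using assms by linarith
    qed (use assms in simp)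
    thus ?thesis by (simp add: algebra_simps power2_eq_square power3_eq_cube)
  qed
  also have "\<dots> \<le> exp (4*t) * (1 - t)" using e assms by (intro mult_right_mono) auto
  finally show ?thesis .
qed

lemma count_bad:
  fixes p :: "nat \<Rightarrow> real" and k :: nat and t w e :: real
  defines "D \<equiv> {1..2*k}" and "S \<equiv> {H. H \<subseteq> {1..2*k} \<and> card H = k}"
  assumes k: "k > 0" and p0: "\<And>x. 0 \<le> p x"
    and pw: "\<And>a b. a \<in> D \<Longrightarrow> b \<in> D \<Longrightarrow> p a - p b \<le> w * ((\<Sum>x\<in>D. p x)/(2*k))"
    and w: "w > 0" and t: "0 < t" "t \<le> 4/5" and e: "exp (4*t) \<le> e"
  shows "real (card {H\<in>S. e * (\<Sum>x\<in>D-H. p x) < (\<Sum>x\<in>H. p x)}) \<le> exp (-(t^2 * (2*k) / w^2)) * real (card S)"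
proof -
  define m where "m = (\<Sum>x\<in>D. p x)/(2*k)"
  have finD: "finite D" by (simp add: D_def)
  have finS: "finite S" unfolding S_def by (auto intro: finite_subset[of _ "Pow {1..2*k}"])
  have m0: "m \<ge> 0" unfolding m_def by (intro divide_nonneg_nonneg sum_nonneg) (auto simp: p0)
  have sumD: "(\<Sum>x\<in>D. p x) = 2*k*m" using k by (simp add: m_def)
  show ?thesis
  proof (cases "m = 0")
    case True
    then have "\<forall>x\<in>D. p x = 0" using sumD sum_nonneg_eq_0_iff[OF finD, of p] p0 by auto
    then have emp: "{H\<in>S. e * (\<Sum>x\<in>D-H. p x) < (\<Sum>x\<in>H. p x)} = {}"
      by (auto simp: S_def D_def subset_iff)
    show ?thesis by (simp only: emp card.empty) simp
  next
    case False
    with m0 have mpos: "m > 0" by simp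
    define z where "z H = (\<Sum>x\<in>H. p x) - k*m" for H
    have claim1: "z H > t*k*m" if "H \<in> S" "e * (\<Sum>x\<in>D-H. p x) < (\<Sum>x\<in>H. p x)" for H
    proof (rule ccontr)
      assume nz: "\<not> z H > t*k*m"
      have HD: "H \<subseteq> D" using that by (simp add: S_def D_def)
      have "(\<Sum>x\<in>D. p x) = (\<Sum>x\<in>D-H. p x) + (\<Sum>x\<in>H. p x)"
        using sum.subset_diff[OF HD finD] by simp
      hence cmp: "(\<Sum>x\<in>D-H. p x) = k*m - z H" using sumD by (simp add: z_def algebra_simps)
      have e0: "e \<ge> 0" using e exp_ge_zero order_trans by blast
      have "(\<Sum>x\<in>H. p x) = k*m + z H" by (simp add: z_def)
      also have "\<dots> \<le> (k*m) * (1 + t)" using nz by (simp add: algebra_simps)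
      also have "\<dots> \<le> (k*m) * (exp (4*t) * (1 - t))"
        using exp_quad[of t] t mpos by (intro mult_left_mono) auto
      also have "\<dots> \<le> (k*m) * (e * (1 - t))"
        using e t mpos by (intro mult_left_mono mult_right_mono) auto
      also have "\<dots> = e * (k*m - t*k*m)" by (simp add: algebra_simps)
      also have "\<dots> \<le> e * (k*m - z H)" using nz e0 by (intro mult_left_mono) auto
      finally show False using that(2) cmp by simp
    qed
    define f where "f H = (if z H > t*k*m then 1 else (0::real))" for H
    have "card {H\<in>S. e * (\<Sum>x\<in>D-H. p x) < (\<Sum>x\<in>H. p x)} \<le> card {H\<in>S. z H > t*k*m}"
      by (intro card_mono) (use finS claim1 in auto)
    also have "real (card {H\<in>S. z H > t*k*m}) = (\<Sum>H\<in>S. f H)"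
      using sum.inter_filter[OF finS, of "\<lambda>_. 1::real" "\<lambda>H. z H > t*k*m"] by (simp add: f_def)
    finally have c1: "real (card {H\<in>S. e * (\<Sum>x\<in>D-H. p x) < (\<Sum>x\<in>H. p x)}) \<le> (\<Sum>H\<in>S. f H)" by simp
    define P where "P = {q. q permutes D}"
    have finP: "finite P" unfolding P_def using finD by (rule finite_permutations)
    have cardP: "card P > 0" unfolding P_def using card_permutations[OF refl finD] by simp
    define E where "E = exp (-(t^2 * (2*k) / w^2))"
    have orb: "(\<Sum>q\<in>P. f (q ` pairsel k T)) * real (card S) = real (card P) * (\<Sum>H\<in>S. f H)" for T
      unfolding P_def S_def D_def
      by (rule orbit_average) (simp_all add: pairsel_card, auto simp: pairsel_def)
    have inner: "(\<Sum>T\<in>Pow {..<k}. f (q ` pairsel k T)) \<le> 2^k * E" if q: "q \<in> P" for q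
    proof -
      have qD: "q permutes D" using q by (simp add: P_def)
      define g where "g a = p (q a) - m" for a
      define c where "c j = (g (2*j+2) - g (2*j+1))/2" for j
      have g0: "(\<Sum>a\<in>{1..2*k}. g a) = 0"
      proof -
        have "(\<Sum>a\<in>D. p (q a)) = (\<Sum>a\<in>D. p a)"
          using sum.permute[OF qD, of p] by (simp add: comp_def)
        thus ?thesis using sumD by (simp add: g_def D_def sum_subtractf)
      qed
      have zq: "z (q ` pairsel k T) = (\<Sum>j<k. if j \<in> T then c j else - c j)" for T
      proof -
        have "z (q ` pairsel k T) = (\<Sum>a\<in>pairsel k T. p (q a)) - k*m"
          unfolding z_def using permutes_inj[OF qD]
          by (subst sum.reindex) (auto intro: inj_on_subset)
        also have "\<dots> = (\<Sum>a\<in>pairsel k T. g a)"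
          by (simp add: g_def sum_subtractf pairsel_card)
        also have "\<dots> = (\<Sum>j<k. if j \<in> T then c j else - c j)"
          unfolding c_def by (rule sum_pairsel[OF g0])
        finally show ?thesis .
      qed
      have cb: "(c j)^2 \<le> (w*m/2)^2" if "j < k" for j
      proof -
        have a: "2*j+2 \<in> D" "2*j+1 \<in> D" using that by (auto simp: D_def)
        have qa: "q (2*j+2) \<in> D" "q (2*j+1) \<in> D"
          using a permutes_in_image[OF qD] by auto
        have "p (q (2*j+2)) - p (q (2*j+1)) \<le> w*m" "p (q (2*j+1)) - p (q (2*j+2)) \<le> w*m"
          using pw[OF qa(1) qa(2)] pw[OF qa(2) qa(1)] by (simp_all add: m_def)
        hence "\<bar>c j\<bar> \<le> w*m/2" by (simp add: c_def g_def abs_le_iff)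
        thus ?thesis by (metis abs_ge_zero power2_abs power_mono)
      qed
      define V where "V = real k * (w*m/2)^2"
      have V: "V > 0" using k w mpos by (simp add: V_def)
      have cV: "(\<Sum>j<k. (c j)^2) \<le> V"
        using sum_mono[of "{..<k}" "\<lambda>j. (c j)^2" "\<lambda>_. (w*m/2)^2"] cb by (simp add: V_def)
      have tkm: "t*k*m > 0" using t k mpos by simp
      have "(\<Sum>T\<in>Pow {..<k}. f (q ` pairsel k T)) = real (card {T \<in> Pow {..<k}. t*k*m < (\<Sum>j<k. if j \<in> T then c j else - c j)})"
        using sum.inter_filter[of "Pow {..<k}" "\<lambda>_. 1::real" "\<lambda>T. t*k*m < (\<Sum>j<k. if j \<in> T then c j else - c j)"]
        by (simp add: f_def zq)
      also have "\<dots> \<le> 2^k * exp (-((t*k*m)^2)/(2*V))"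
        by (rule rademacher_tail[OF tkm V cV])
      also have "-((t*k*m)^2)/(2*V) = -(t^2 * (2*k) / w^2)"
        using k w mpos by (simp add: V_def power2_eq_square field_simps)
      finally show ?thesis by (simp add: E_def)
    qed
    have "real (2^k) * (real (card P) * (\<Sum>H\<in>S. f H)) = (\<Sum>T\<in>Pow {..<k}. (\<Sum>q\<in>P. f (q ` pairsel k T)) * real (card S))"
      by (simp add: orb card_Pow)
    also have "\<dots> = (\<Sum>q\<in>P. \<Sum>T\<in>Pow {..<k}. f (q ` pairsel k T)) * real (card S)"
      by (simp add: sum_distrib_right[symmetric] sum.swap[of _ "Pow {..<k}"])
    also have "\<dots> \<le> (\<Sum>q\<in>P. 2^k * E) * real (card S)"
      by (intro mult_right_mono sum_mono inner) auto
    also have "\<dots> = real (2^k) * (real (card P) * (E * real (card S)))" by simp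
    finally have "(\<Sum>H\<in>S. f H) \<le> E * real (card S)"
      using cardP by (simp add: mult_le_cancel_left_pos)
    with c1 show ?thesis by (simp add: E_def)
  qed
qed



lemma pmf_le_measure:
  assumes c: "c \<ge> 0" and le: "\<And>y. y \<in> A \<Longrightarrow> pmf p y \<le> c * pmf q y"
  shows "measure_pmf.prob p A \<le> c * measure_pmf.prob q A"
proof -
  have "infsetsum (pmf p) A \<le> infsetsum (\<lambda>y. c * pmf q y) A"
    by (rule infsetsum_mono) (auto intro: pmf_abs_summable abs_summable_on_cmult_right le)
  also have "\<dots> = c * infsetsum (pmf q) A"
    by (rule infsetsum_cmult_right) (rule pmf_abs_summable)
  finally show ?thesis by (simp add: measure_pmf_conv_infsetsum)
qed

lemma privacy_from_bad:
  assumes c: "c \<ge> 0" and le: "\<And>y. y \<notin> B \<Longrightarrow> pmf p y \<le> c * pmf q y"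
    and bd: "measure_pmf.prob p B \<le> d0"
  shows "measure_pmf.prob p Y \<le> c * measure_pmf.prob q Y + d0"
proof -
  have "measure_pmf.prob p Y \<le> measure_pmf.prob p ((Y - B) \<union> B)"
    by (rule measure_pmf.finite_measure_mono) auto
  also have "\<dots> \<le> measure_pmf.prob p (Y - B) + measure_pmf.prob p B"
    by (rule measure_subadditive) (auto simp: measure_pmf.emeasure_finite)
  also have "measure_pmf.prob p (Y - B) \<le> c * measure_pmf.prob q (Y - B)"
    by (rule pmf_le_measure[OF c]) (use le in auto)
  also have "\<dots> \<le> c * measure_pmf.prob q Y"
    by (intro mult_left_mono c measure_pmf.finite_measure_mono) auto
  finally show ?thesis using bd by simp
qed

lemma pmf_rand_uniform:
  "finite H \<Longrightarrow> H \<noteq> {} \<Longrightarrow> pmf (rand_uniform H R) y = (\<Sum>x\<in>H. pmf (R x) y) / real (card H)"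
  by (simp add: rand_uniform_def pmf_bind_pmf_of_set)

lemma markov_count:
  fixes a :: "'a \<Rightarrow> real"
  assumes "finite S" "\<And>H. H \<in> S \<Longrightarrow> a H \<ge> 0" "dl > 0"
  shows "real (card {H\<in>S. dl < a H}) \<le> (\<Sum>H\<in>S. a H) / dl"
proof -
  have "real (card {H\<in>S. dl < a H}) * dl = (\<Sum>H\<in>{H\<in>S. dl < a H}. dl)" by simp
  also have "\<dots> \<le> (\<Sum>H\<in>{H\<in>S. dl < a H}. a H)" by (intro sum_mono) auto
  also have "\<dots> \<le> (\<Sum>H\<in>S. a H)" by (intro sum_mono2) (use assms in auto)
  finally show ?thesis using assms by (simp add: le_divide_eq)
qed



theorem mainTheorem9:
  fixes eps delta :: real and d n :: nat
    and R :: "nat \<Rightarrow> nat \<Rightarrow> 'y::countable pmf"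
  assumes "eps > 0" and "0 < delta" and "delta < 1" and "n \<ge> 1"
    and "even d"
    and "real d > 4 * (exp (2 * eps) - 1)^2 * ln (12 * exp eps * real n / delta)"
    and "\<forall>i\<in>{1..n}. private_randomizer (dset d) (R i) eps 0"
  shows "measure_pmf.prob (pmf_of_set (half_subsets d))
           {H. \<forall>i\<in>{1..n}. private_randomizer {1, -1} (Q_rand d H (R i))
                 ((exp (2 * eps) - 1) * sqrt (16 / real d * ln (24 * exp eps * real n / delta)))
                 delta} > 2 / 3"
proof -
  note eps = assms(1) and dl = assms(2) assms(3) and n1 = assms(4) and ev = assms(5)
    and dbig = assms(6) and priv = assms(7)
  define E' where "E' = (exp (2 * eps) - 1) * sqrt (16 / real d * ln (24 * exp eps * real n / delta))"
  define k where "k = d div 2"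
  have d2k: "d = 2*k" using ev by (simp add: k_def)
  define D where "D = dset d"
  have Dk: "D = {1..2*k}" by (simp add: D_def dset_def d2k)
  define S where "S = half_subsets d"
  have Sk: "S = {H. H \<subseteq> {1..2*k} \<and> card H = k}"
    by (simp add: S_def half_subsets_def dset_def d2k)
  define u where "u = exp (2*eps) - 1"
  define Mv where "Mv = ln (12 * exp eps * real n / delta)"
  define Lv where "Lv = ln (24 * exp eps * real n / delta)"
  define w where "w = exp eps - exp (-eps)"
  have u: "u > 0" using eps by (simp add: u_def)
  have big: "12 * exp eps * real n / delta \<ge> 2"
  proof -
    have "12 * 1 * 1 \<le> 12 * exp eps * real n" using eps n1
      by (intro mult_mono) auto
    also have "\<dots> \<le> 12 * exp eps * real n / delta"
    proof -
      have "(12 * exp eps * real n) * delta \<le> 12 * exp eps * real n"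
        using dl by (intro mult_left_le) auto
      thus ?thesis using dl by (simp add: le_divide_eq)
    qed
    finally show ?thesis by simp
  qed
  have Mv: "Mv \<ge> ln 2" unfolding Mv_def using big by simp
  have ln2: "ln (2::real) > 0" by simp
  have Mpos: "Mv > 0" using Mv ln2 by linarith
  have LM: "Lv = ln 2 + Mv"
  proof -
    have "24 * exp eps * real n / delta = 2 * (12 * exp eps * real n / delta)" by simp
    moreover have "ln (2 * (12 * exp eps * real n / delta)) = ln 2 + ln (12 * exp eps * real n / delta)"
      using big n1 dl by (subst ln_mult) auto
    ultimately show ?thesis unfolding Lv_def Mv_def by metis
  qed
  have Lpos: "Lv > 0" using LM Mpos ln2 by linarith
  have dpos: "real d > 0"
  proof -
    have "4 * u^2 * Mv > 0" using u Mpos by simp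
    thus ?thesis using dbig by (simp add: u_def Mv_def)
  qed
  have kpos: "k > 0" using dpos d2k by simp
  define t where "t = u * sqrt (Lv / real d)"
  have E't: "E' = 4 * t"
  proof -
    have "sqrt (16 / real d * Lv) = sqrt (4^2 * (Lv / real d))" by simp
    also have "\<dots> = 4 * sqrt (Lv / real d)" by (simp only: real_sqrt_mult real_sqrt_abs)
    finally have "sqrt (16 / real d * Lv) = 4 * sqrt (Lv / real d)" .
    thus ?thesis by (simp add: E'_def t_def u_def Lv_def)
  qed
  have tpos: "t > 0" using u Lpos dpos by (simp add: t_def)
  have t2: "t^2 = u^2 * Lv / real d" using Lpos dpos by (simp add: t_def power_mult_distrib)
  have tle: "t \<le> 4/5"
  proof -
    have "t^2 \<le> u^2 * (2*Mv) / real d" unfolding t2 using LM Mv u dpos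
      by (intro divide_right_mono mult_left_mono) auto
    also have "\<dots> < u^2 * (2*Mv) / (4 * u^2 * Mv)"
    proof -
      have dbig': "4 * u^2 * Mv < real d" using dbig by (simp add: u_def Mv_def)
      show ?thesis using dbig' u Mpos dpos by (intro divide_strict_left_mono) auto
    qed
    also have "\<dots> = 1/2" using u Mpos by (simp add: field_simps power2_eq_square)
    finally have "t^2 < (4/5)^2" by (simp add: power2_eq_square)
    hence "t < 4/5" by (rule power_less_imp_less_base) simp
    thus ?thesis by simp
  qed
  have wpos: "w > 0" using eps by (simp add: w_def)
  have uw: "u = exp eps * w"
    by (simp add: u_def w_def algebra_simps exp_minus field_simps flip: exp_add)
  define q where "q = exp (-(t^2 * (2*k) / w^2))"
  have qb: "q \<le> delta / (24 * n)"
  proof -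
    have "t^2 * (2*k) / w^2 = exp eps ^ 2 * Lv"
      using d2k dpos wpos unfolding t2 uw by (simp add: field_simps power2_eq_square)
    also have "\<dots> \<ge> Lv" using Lpos eps by (simp add: mult_le_cancel_right1)
    finally have "q \<le> exp (- Lv)" by (simp add: q_def)
    also have "exp (- Lv) = delta / (24 * exp eps * real n)"
      using dl n1 by (simp add: Lv_def exp_minus exp_ln)
    also have "\<dots> \<le> delta / (24 * real n)"
      using dl n1 eps by (intro divide_left_mono) auto
    finally show ?thesis by simp
  qed

  define mi where "mi i = rand_uniform D (R i)" for i
  define B where "B i H = {y. exp E' * pmf (rand_uniform (D - H) (R i)) y < pmf (rand_uniform H (R i)) y}" for i H
  have finS: "finite S" unfolding Sk by (auto intro: finite_subset[of _ "Pow {1..2*k}"])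
  have finD: "finite D" by (simp add: Dk)
  have cardD: "card D = 2*k" by (simp add: Dk)
  have HS: "H \<subseteq> D" "card H = k" "finite H" "H \<noteq> {}" "card (D - H) = k" "finite (D - H)" "D - H \<noteq> {}"
    if "H \<in> S" for H
  proof -
    show HD: "H \<subseteq> D" and cH: "card H = k" using that by (simp_all add: Sk Dk)
    show fH: "finite H" using HD finD finite_subset by blast
    show "H \<noteq> {}" using cH kpos by auto
    show cDH: "card (D - H) = k" using HD finD cH cardD by (simp add: card_Diff_subset fH)
    show "finite (D - H)" using finD by simp
    show "D - H \<noteq> {}" using cDH kpos by (metis card.empty less_irrefl)
  qed
  have compS: "D - H \<in> S" if "H \<in> S" for H
    using HS[OF that] by (simp add: Sk Dk)
  have pr: "pmf (R i a) y \<le> exp eps * pmf (R i b) y" if "i \<in> {1..n}" "a \<in> D" "b \<in> D" for i a b y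
  proof -
    have "private_randomizer (dset d) (R i) eps 0" using priv that(1) by blast
    hence "measure_pmf.prob (R i a) {y} \<le> exp eps * measure_pmf.prob (R i b) {y} + 0"
      using that(2,3) unfolding private_randomizer_def D_def by blast
    thus ?thesis by (simp add: measure_pmf_single)
  qed
  have stepA: "real (card {H\<in>S. y \<in> B i H}) \<le> q * real (card S)" if i: "i \<in> {1..n}" for i y
  proof -
    define p where "p x = pmf (R i x) y" for x
    have pw: "p a - p b \<le> w * ((\<Sum>x\<in>{1..2*k}. p x)/(2*k))" if "a \<in> {1..2*k}" "b \<in> {1..2*k}" for a b
    proof -
      have ab: "a \<in> D" "b \<in> D" using that Dk by auto
      define m where "m = (\<Sum>x\<in>D. p x)/(2*k)"
      have sm: "(\<Sum>x\<in>D. p x) = 2*k*m" using kpos by (simp add: m_def)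
      have "real (2*k) * p a = (\<Sum>x\<in>D. p a)" using cardD by simp
      also have "\<dots> \<le> (\<Sum>x\<in>D. exp eps * p x)"
        by (intro sum_mono) (use pr[OF i ab(1)] in \<open>auto simp: p_def\<close>)
      also have "\<dots> = real (2*k) * (exp eps * m)" using sm by (simp add: sum_distrib_left[symmetric])
      finally have h1: "p a \<le> exp eps * m" using kpos by (simp add: mult_le_cancel_left_pos)
      have "real (2*k) * m = (\<Sum>x\<in>D. p x)" using sm by simp
      also have "\<dots> \<le> (\<Sum>x\<in>D. exp eps * p b)"
        by (intro sum_mono) (use pr[OF i _ ab(2)] in \<open>auto simp: p_def\<close>)
      also have "\<dots> = real (2*k) * (exp eps * p b)" using cardD by simp
      finally have "m \<le> exp eps * p b" using kpos by (simp add: mult_le_cancel_left_pos)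
      hence "exp (-eps) * m \<le> p b" by (simp add: exp_minus field_simps)
      hence "p a - p b \<le> exp eps * m - exp (-eps) * m" using h1 by linarith
      thus ?thesis by (simp add: w_def m_def Dk left_diff_distrib diff_divide_distrib)
    qed
    have e4: "exp (4*t) \<le> exp E'" using E't by simp
    have p0: "\<And>x. 0 \<le> p x" by (simp add: p_def)
    note cb = count_bad[of k p w t "exp E'", OF kpos p0 pw wpos tpos tle e4, unfolded p_def]
    have eq: "{H\<in>S. y \<in> B i H} = {H \<in> S.
        exp E' * (\<Sum>x\<in>D - H. pmf (R i x) y) < (\<Sum>x\<in>H. pmf (R i x) y)}"
    proof (intro Collect_cong conj_cong refl)
      fix H
      assume H: "H \<in> S"
      show "(y \<in> B i H) = (exp E' * (\<Sum>x\<in>D - H. pmf (R i x) y) < (\<Sum>x\<in>H. pmf (R i x) y))"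
        using HS[OF H] kpos
        by (simp add: B_def pmf_rand_uniform field_simps)
    qed
    show ?thesis unfolding eq using cb[folded Sk, folded Dk] by (simp add: q_def)
  qed

  have stepB: "(\<Sum>H\<in>S. measure_pmf.prob (mi i) (B i H)) \<le> q * real (card S)" if i: "i \<in> {1..n}" for i
  proof -
    have "(\<Sum>H\<in>S. measure_pmf.prob (mi i) (B i H)) = (\<Sum>H\<in>S. measure_pmf.expectation (mi i) (indicator (B i H)))"
      by (simp add: integral_indicator)
    also have "\<dots> = measure_pmf.expectation (mi i) (\<lambda>y. \<Sum>H\<in>S. indicator (B i H) y)"
      using Bochner_Integration.integral_sum[where I=S and M="measure_pmf (mi i)" and f="\<lambda>H. indicat_real (B i H)"]
      by (simp add: integrable_indicator_iff measure_pmf.emeasure_finite less_top[symmetric])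
    also have "\<dots> \<le> q * real (card S)"
    proof (rule measure_pmf.integral_le_const)
      show "integrable (measure_pmf (mi i)) (\<lambda>y. \<Sum>H\<in>S. indicat_real (B i H) y)"
        by (intro Bochner_Integration.integrable_sum) (simp add: integrable_indicator_iff measure_pmf.emeasure_finite less_top[symmetric])
      have "(\<Sum>H\<in>S. indicat_real (B i H) y) \<le> q * real (card S)" for y
      proof -
        have "(\<Sum>H\<in>S. indicat_real (B i H) y) = real (card {H\<in>S. y \<in> B i H})"
          using sum.inter_filter[OF finS, of "\<lambda>_. 1::real" "\<lambda>H. y \<in> B i H"] by (simp add: indicator_def of_bool_def)
        thus ?thesis using stepA[OF i, of y] by simp
      qed
      thus "AE y in measure_pmf (mi i). (\<Sum>H\<in>S. indicat_real (B i H) y) \<le> q * real (card S)" by simp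
    qed
    finally show ?thesis .
  qed
  have bijc: "bij_betw (\<lambda>H. D - H) S S"
  proof (rule bij_betw_imageI)
    show "inj_on (\<lambda>H. D - H) S"
    proof (rule inj_onI)
      fix H1 H2 assume "H1 \<in> S" "H2 \<in> S" "D - H1 = D - H2"
      thus "H1 = H2" using HS(1)[of H1] HS(1)[of H2] by (metis double_diff order_refl)
    qed
    show "(\<lambda>H. D - H) ` S = S"
    proof
      show "(\<lambda>H. D - H) ` S \<subseteq> S" using compS by auto
      show "S \<subseteq> (\<lambda>H. D - H) ` S"
      proof
        fix H assume H: "H \<in> S"
        have "H = D - (D - H)" using HS(1)[OF H] by (simp add: double_diff)
        thus "H \<in> (\<lambda>H. D - H) ` S" using compS[OF H] by blast
      qed
    qed
  qed
  have stepB': "(\<Sum>H\<in>S. measure_pmf.prob (mi i) (B i (D - H))) \<le> q * real (card S)" if i: "i \<in> {1..n}" for i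
    using stepB[OF i] sum.reindex_bij_betw[OF bijc, of "\<lambda>H. measure_pmf.prob (mi i) (B i H)"] by simp
  have Sne: "card S > 0"
  proof -
    have "{1..k} \<in> S" by (simp add: Sk)
    thus ?thesis using finS card_gt_0_iff by blast
  qed
  have stepC: "real (card {H\<in>S. delta < 2 * measure_pmf.prob (mi i) (B i H)}) \<le> real (card S) / (12 * n)"
    and stepC': "real (card {H\<in>S. delta < 2 * measure_pmf.prob (mi i) (B i (D - H))}) \<le> real (card S) / (12 * n)"
    if i: "i \<in> {1..n}" for i
  proof -
    have fin: "2 * q * real (card S) / delta \<le> real (card S) / (12 * n)"
    proof -
      have "2 * q * real (card S) / delta \<le> 2 * (delta / (24 * n)) * real (card S) / delta"
        using qb dl by (intro divide_right_mono mult_right_mono) auto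
      also have "\<dots> = real (card S) / (12 * n)" using dl by (simp add: field_simps)
      finally show ?thesis .
    qed
    have "real (card {H\<in>S. delta < 2 * measure_pmf.prob (mi i) (B i H)}) \<le> (\<Sum>H\<in>S. 2 * measure_pmf.prob (mi i) (B i H)) / delta"
      by (rule markov_count) (use finS dl in auto)
    also have "\<dots> \<le> 2 * q * real (card S) / delta"
      using stepB[OF i] dl by (simp add: sum_distrib_left[symmetric] divide_right_mono)
    finally show "real (card {H\<in>S. delta < 2 * measure_pmf.prob (mi i) (B i H)}) \<le> real (card S) / (12 * n)"
      using fin by linarith
    have "real (card {H\<in>S. delta < 2 * measure_pmf.prob (mi i) (B i (D - H))}) \<le> (\<Sum>H\<in>S. 2 * measure_pmf.prob (mi i) (B i (D - H))) / delta"
      by (rule markov_count) (use finS dl in auto)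
    also have "\<dots> \<le> 2 * q * real (card S) / delta"
      using stepB'[OF i] dl by (simp add: sum_distrib_left[symmetric] divide_right_mono)
    finally show "real (card {H\<in>S. delta < 2 * measure_pmf.prob (mi i) (B i (D - H))}) \<le> real (card S) / (12 * n)"
      using fin by linarith
  qed

  have half: "measure_pmf.prob (rand_uniform H1 (R i)) A \<le> 2 * measure_pmf.prob (mi i) A"
    if H1: "H1 \<in> S" for H1 i A
  proof (rule pmf_le_measure)
    fix y
    have "(\<Sum>x\<in>H1. pmf (R i x) y) \<le> (\<Sum>x\<in>D. pmf (R i x) y)"
      using HS[OF H1] finD by (intro sum_mono2) auto
    hence "(\<Sum>x\<in>H1. pmf (R i x) y) / real k \<le> 2 * ((\<Sum>x\<in>D. pmf (R i x) y) / real (2*k))"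
      using kpos by (simp add: divide_right_mono)
    thus "pmf (rand_uniform H1 (R i)) y \<le> 2 * pmf (mi i) y"
      using HS[OF H1] finD cardD kpos unfolding mi_def
      by (subst (1 2) pmf_rand_uniform) auto
  qed simp
  have E'0: "E' \<ge> 0" using E't tpos by simp
  have goodpriv: "private_randomizer {1,-1} (Q_rand d H (R i)) E' delta"
    if H: "H \<in> S" and g1: "2 * measure_pmf.prob (mi i) (B i H) \<le> delta"
      and g2: "2 * measure_pmf.prob (mi i) (B i (D - H)) \<le> delta" for H i
  proof -
    have Q1: "Q_rand d H (R i) 1 = rand_uniform H (R i)" by (simp add: Q_rand_def)
    have Q2: "Q_rand d H (R i) (-1) = rand_uniform (D - H) (R i)" by (simp add: Q_rand_def D_def)
    have same: "measure_pmf.prob p Y \<le> exp E' * measure_pmf.prob p Y + delta" for p :: "'y pmf" and Y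
    proof -
      have "measure_pmf.prob p Y \<le> exp E' * measure_pmf.prob p Y"
      proof -
        have "1 \<le> exp E'" using E'0 by simp
        from mult_right_mono[OF this measure_nonneg] show ?thesis by simp
      qed
      thus ?thesis using dl by simp
    qed
    have d12: "measure_pmf.prob (rand_uniform H (R i)) Y \<le> exp E' * measure_pmf.prob (rand_uniform (D - H) (R i)) Y + delta" for Y
    proof (rule privacy_from_bad[where B="B i H"])
      show "measure_pmf.prob (rand_uniform H (R i)) (B i H) \<le> delta"
        using half[OF H, of i "B i H"] g1 by simp
    qed (auto simp: B_def not_less)
    have d21: "measure_pmf.prob (rand_uniform (D - H) (R i)) Y \<le> exp E' * measure_pmf.prob (rand_uniform H (R i)) Y + delta" for Y
    proof (rule privacy_from_bad[where B="B i (D - H)"])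
      show "measure_pmf.prob (rand_uniform (D - H) (R i)) (B i (D - H)) \<le> delta"
        using half[OF compS[OF H], of i "B i (D - H)"] g2 by simp
    next
      have "D - (D - H) = H" using HS(1)[OF H] by (simp add: double_diff)
      thus "\<And>y. y \<notin> B i (D - H) \<Longrightarrow> pmf (rand_uniform (D - H) (R i)) y \<le> exp E' * pmf (rand_uniform H (R i)) y"
        by (auto simp: B_def not_less)
    qed simp
    show ?thesis unfolding private_randomizer_def
    proof (intro ballI allI)
      fix x x' :: int and Y
      assume "x \<in> {1, -1}" "x' \<in> {1, -1}"
      then consider "x = x'" | "x = 1" "x' = -1" | "x = -1" "x' = 1" by auto
      then show "measure_pmf.prob (Q_rand d H (R i) x) Y \<le> exp E' * measure_pmf.prob (Q_rand d H (R i) x') Y + delta"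
      proof cases
        case 1 then show ?thesis using same by simp
      next
        case 2 then show ?thesis using d12 Q1 Q2 by simp
      next
        case 3 then show ?thesis using d21 Q1 Q2 by simp
      qed
    qed
  qed

  define Bad where "Bad = {H\<in>S. \<not> (\<forall>i\<in>{1..n}. 2 * measure_pmf.prob (mi i) (B i H) \<le> delta \<and> 2 * measure_pmf.prob (mi i) (B i (D - H)) \<le> delta)}"
  define A1 where "A1 i = {H\<in>S. delta < 2 * measure_pmf.prob (mi i) (B i H)} \<union> {H\<in>S. delta < 2 * measure_pmf.prob (mi i) (B i (D - H))}" for i
  have BadA: "Bad \<subseteq> (\<Union>i\<in>{1..n}. A1 i)" by (auto simp: Bad_def A1_def not_le)
  have finA: "finite (\<Union>i\<in>{1..n}. A1 i)" using finS by (auto simp: A1_def)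
  have "real (card Bad) \<le> real (card (\<Union>i\<in>{1..n}. A1 i))"
    using card_mono[OF finA BadA] by simp
  also have "\<dots> \<le> real (\<Sum>i\<in>{1..n}. card (A1 i))"
    using card_UN_le[of "{1..n}" A1] by (simp only: of_nat_le_iff) simp
  also have "\<dots> = (\<Sum>i\<in>{1..n}. real (card (A1 i)))" by simp
  also have "\<dots> \<le> (\<Sum>i\<in>{1..n}. 2 * (real (card S) / (12 * n)))"
  proof (intro sum_mono)
    fix i assume i: "i \<in> {1..n}"
    have "card (A1 i) \<le> card {H\<in>S. delta < 2 * measure_pmf.prob (mi i) (B i H)} + card {H\<in>S. delta < 2 * measure_pmf.prob (mi i) (B i (D - H))}"
      unfolding A1_def by (rule card_Un_le)
    hence "real (card (A1 i)) \<le> real (card {H\<in>S. delta < 2 * measure_pmf.prob (mi i) (B i H)}) + real (card {H\<in>S. delta < 2 * measure_pmf.prob (mi i) (B i (D - H))})"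
      by linarith
    thus "real (card (A1 i)) \<le> 2 * (real (card S) / (12 * n))"
      using stepC[OF i] stepC'[OF i] by linarith
  qed
  also have "\<dots> = real (card S) / 6" using n1 by simp
  finally have cBad: "real (card Bad) \<le> real (card S) / 6" .
  define G where "G = {H. \<forall>i\<in>{1..n}. private_randomizer {1, -1} (Q_rand d H (R i)) E' delta}"
  have SG: "S - Bad \<subseteq> S \<inter> G"
    using goodpriv by (auto simp: Bad_def G_def)
  have BadS: "Bad \<subseteq> S" by (auto simp: Bad_def)
  have "real (card S) - real (card Bad) = real (card (S - Bad))"
    using card_Diff_subset[OF finite_subset[OF BadS finS] BadS] card_mono[OF finS BadS] by simp
  also have "\<dots> \<le> real (card (S \<inter> G))"
    using card_mono[OF _ SG] finS by simp
  finally have "5/6 * real (card S) \<le> real (card (S \<inter> G))" using cBad by simp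
  hence "5/6 \<le> real (card (S \<inter> G)) / real (card S)"
    using Sne by (simp add: le_divide_eq)
  moreover have "measure_pmf.prob (pmf_of_set S) G = real (card (S \<inter> G)) / real (card S)"
    using Sne finS by (intro measure_pmf_of_set) auto
  ultimately have "measure_pmf.prob (pmf_of_set S) G > 2/3" by simp
  thus ?thesis by (simp only: G_def S_def E'_def)
qed

end
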